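(* Let $G$ be a Borel groupoid acting freely on the right of a Borel space $X$ such that the quotient map $q:X\to X/G$ has a Borel cross section. Then $X$ is a proper Borel $G$-space.
   Context: All Borel spaces are analytic. A right Borel $G$-space $X$ has a Borel moment map $s_X:X\to G^{(0)}$ and a Borel action $x\cdot\gamma$ defined when $s_X(x)=r(\gamma)$; it is free if $x\cdot\gamma=x$ implies $\gamma$ is a unit. $X/G$ carries the quotient Borel structure. $X$ is a proper right Borel $G$-space if the transformation groupoid $X\rtimes G=\{(x,\gamma):s_X(x)=r(\gamma)\}$ (with $(x,\gamma)(x\cdot\gamma,\eta)=(x,\gamma\eta)$ and unit space $X$) is a proper Borel groupoid, i.e. there is a family $\{m^x\}_{x\in X}$ of probability measures on $X\rtimes G$, $m^x$ supported on the range fibre over $x$, with $x\mapsto\int f\,dm^x$ Borel for nonnegative Borel $f$ and $g\cdot m^{s(g)}=m^{r(g)}$ for all $g\in X\rtimes G$. *)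

theory Defs
  imports "HOL-Probability.Probability"
begin

text \<open>A subset of the reals is analytic if it is empty or a continuous image of
  the Baire space nat => nat (product topology of discrete nat).\<close>
definition analytic_real_set :: "real set \<Rightarrow> bool" where
  "analytic_real_set A \<longleftrightarrow> A = {} \<or>
     (\<exists>h :: (nat \<Rightarrow> nat) \<Rightarrow> real. continuous_on UNIV h \<and> range h = A)"

text \<open>A Borel space is analytic if it is Borel isomorphic to an analytic subset of
  a Polish space (equivalently, of the real line) with the relative Borel structure.\<close>
definition analytic_borel_space :: "'a measure \<Rightarrow> bool" where
  "analytic_borel_space M \<longleftrightarrow>
     (\<exists>f g. f \<in> M \<rightarrow>\<^sub>M borel \<and> inj_on f (space M) \<and> analytic_real_set (f ` space M)
        \<and> g \<in> restrict_space borel (f ` space M) \<rightarrow>\<^sub>M M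
        \<and> (\<forall>x\<in>space M. g (f x) = x))"

record 'g groupoid =
  arrows :: "'g measure"
  units :: "'g set"
  rng :: "'g \<Rightarrow> 'g"
  src :: "'g \<Rightarrow> 'g"
  mult :: "'g \<Rightarrow> 'g \<Rightarrow> 'g"
  ginv :: "'g \<Rightarrow> 'g"

definition composable :: "('g, 'b) groupoid_scheme \<Rightarrow> ('g \<times> 'g) set" where
  "composable G = {(g, h). g \<in> space (arrows G) \<and> h \<in> space (arrows G) \<and> src G g = rng G h}"

definition borel_groupoid :: "('g, 'b) groupoid_scheme \<Rightarrow> bool" where
  "borel_groupoid G \<longleftrightarrow>
     analytic_borel_space (arrows G) \<and>
     units G \<subseteq> space (arrows G) \<and> units G \<in> sets (arrows G) \<and>
     (\<forall>g\<in>space (arrows G). rng G g \<in> units G \<and> src G g \<in> units G) \<and>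
     (\<forall>u\<in>units G. rng G u = u \<and> src G u = u) \<and>
     (\<forall>(g, h)\<in>composable G. mult G g h \<in> space (arrows G) \<and>
        rng G (mult G g h) = rng G g \<and> src G (mult G g h) = src G h) \<and>
     (\<forall>g\<in>space (arrows G). \<forall>h\<in>space (arrows G). \<forall>k\<in>space (arrows G).
        src G g = rng G h \<longrightarrow> src G h = rng G k \<longrightarrow>
        mult G (mult G g h) k = mult G g (mult G h k)) \<and>
     (\<forall>g\<in>space (arrows G). mult G (rng G g) g = g \<and> mult G g (src G g) = g) \<and>
     (\<forall>g\<in>space (arrows G). ginv G g \<in> space (arrows G) \<and>
        rng G (ginv G g) = src G g \<and> src G (ginv G g) = rng G g \<and>
        mult G g (ginv G g) = rng G g \<and> mult G (ginv G g) g = src G g) \<and>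
     rng G \<in> arrows G \<rightarrow>\<^sub>M arrows G \<and> src G \<in> arrows G \<rightarrow>\<^sub>M arrows G \<and>
     ginv G \<in> arrows G \<rightarrow>\<^sub>M arrows G \<and>
     (\<lambda>(g, h). mult G g h) \<in> restrict_space (arrows G \<Otimes>\<^sub>M arrows G) (composable G) \<rightarrow>\<^sub>M arrows G"

text \<open>\<open>sX\<close> is the moment map, \<open>act x \<gamma>\<close> is \<open>x \<cdot> \<gamma>\<close> (defined when \<open>sX x = r \<gamma>\<close>).\<close>
definition action_domain :: "'x measure \<Rightarrow> ('g, 'b) groupoid_scheme \<Rightarrow> ('x \<Rightarrow> 'g) \<Rightarrow> ('x \<times> 'g) set" where
  "action_domain X G sX = {(x, \<gamma>). x \<in> space X \<and> \<gamma> \<in> space (arrows G) \<and> sX x = rng G \<gamma>}"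

definition right_borel_G_space ::
  "'x measure \<Rightarrow> ('g, 'b) groupoid_scheme \<Rightarrow> ('x \<Rightarrow> 'g) \<Rightarrow> ('x \<Rightarrow> 'g \<Rightarrow> 'x) \<Rightarrow> bool" where
  "right_borel_G_space X G sX act \<longleftrightarrow>
     analytic_borel_space X \<and>
     sX \<in> X \<rightarrow>\<^sub>M arrows G \<and> (\<forall>x\<in>space X. sX x \<in> units G) \<and>
     (\<lambda>(x, \<gamma>). act x \<gamma>) \<in> restrict_space (X \<Otimes>\<^sub>M arrows G) (action_domain X G sX) \<rightarrow>\<^sub>M X \<and>
     (\<forall>(x, \<gamma>)\<in>action_domain X G sX. act x \<gamma> \<in> space X \<and> sX (act x \<gamma>) = src G \<gamma>) \<and>
     (\<forall>x\<in>space X. act x (sX x) = x) \<and>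
     (\<forall>(x, \<gamma>)\<in>action_domain X G sX. \<forall>\<eta>\<in>space (arrows G). src G \<gamma> = rng G \<eta> \<longrightarrow>
        act (act x \<gamma>) \<eta> = act x (mult G \<gamma> \<eta>))"

definition free_action ::
  "'x measure \<Rightarrow> ('g, 'b) groupoid_scheme \<Rightarrow> ('x \<Rightarrow> 'g) \<Rightarrow> ('x \<Rightarrow> 'g \<Rightarrow> 'x) \<Rightarrow> bool" where
  "free_action X G sX act \<longleftrightarrow>
     (\<forall>(x, \<gamma>)\<in>action_domain X G sX. act x \<gamma> = x \<longrightarrow> \<gamma> \<in> units G)"

definition orbit ::
  "'x measure \<Rightarrow> ('g, 'b) groupoid_scheme \<Rightarrow> ('x \<Rightarrow> 'g) \<Rightarrow> ('x \<Rightarrow> 'g \<Rightarrow> 'x) \<Rightarrow> 'x \<Rightarrow> 'x set" where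
  "orbit X G sX act x = {act x \<gamma> | \<gamma>. (x, \<gamma>) \<in> action_domain X G sX}"

text \<open>The quotient map \<open>q = orbit X G sX act\<close>, and \<open>X/G\<close> with the quotient Borel structure.\<close>
definition orbit_space ::
  "'x measure \<Rightarrow> ('g, 'b) groupoid_scheme \<Rightarrow> ('x \<Rightarrow> 'g) \<Rightarrow> ('x \<Rightarrow> 'g \<Rightarrow> 'x) \<Rightarrow> 'x set measure" where
  "orbit_space X G sX act =
     (let q = orbit X G sX act in
      measure_of (q ` space X) {B. B \<subseteq> q ` space X \<and> q -` B \<inter> space X \<in> sets X} (\<lambda>_. 0))"

text \<open>A proper family is a family of probability measures
  \<open>m u\<close> on \<open>A\<close>, \<open>m u\<close> supported on the range fibre over \<open>u\<close>, Borel in \<open>u\<close>, and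
  equivariant: \<open>g \<cdot> m (s g) = m (r g)\<close>, where \<open>g \<cdot> \<mu>\<close> is the push-forward of \<open>\<mu>\<close>
  (a measure on the range fibre over \<open>s g\<close>) under \<open>h \<mapsto> g h\<close>.\<close>
definition proper_groupoid_family ::
  "'a measure \<Rightarrow> 'u measure \<Rightarrow> ('a \<Rightarrow> 'u) \<Rightarrow> ('a \<Rightarrow> 'u) \<Rightarrow> ('a \<Rightarrow> 'a \<Rightarrow> 'a)
     \<Rightarrow> ('u \<Rightarrow> 'a measure) \<Rightarrow> bool" where
  "proper_groupoid_family A U r s mul m \<longleftrightarrow>
     (\<forall>u\<in>space U. prob_space (m u) \<and> sets (m u) = sets A \<and>
        emeasure (m u) {a \<in> space A. r a = u} = 1) \<and>
     (\<forall>f :: 'a \<Rightarrow> ennreal. f \<in> borel_measurable A \<longrightarrow>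
        (\<lambda>u. \<integral>\<^sup>+ a. f a \<partial>(m u)) \<in> borel_measurable U) \<and>
     (\<forall>g\<in>space A. \<forall>E\<in>sets A.
        emeasure (m (r g)) E = emeasure (m (s g)) {h \<in> space A. r h = s g \<and> mul g h \<in> E})"

text \<open>\<open>X \<rtimes> G = {(x,\<gamma>). sX x = r \<gamma>}\<close>, with \<open>r(x,\<gamma>) = x\<close>, \<open>s(x,\<gamma>) = x \<cdot> \<gamma>\<close>,
  \<open>(x,\<gamma>)(x\<cdot>\<gamma>,\<eta>) = (x,\<gamma>\<eta>)\<close>, unit space \<open>X\<close>.\<close>
definition transformation_arrows ::
  "'x measure \<Rightarrow> ('g, 'b) groupoid_scheme \<Rightarrow> ('x \<Rightarrow> 'g) \<Rightarrow> ('x \<times> 'g) measure" where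
  "transformation_arrows X G sX = restrict_space (X \<Otimes>\<^sub>M arrows G) (action_domain X G sX)"

definition proper_right_borel_G_space ::
  "'x measure \<Rightarrow> ('g, 'b) groupoid_scheme \<Rightarrow> ('x \<Rightarrow> 'g) \<Rightarrow> ('x \<Rightarrow> 'g \<Rightarrow> 'x) \<Rightarrow> bool" where
  "proper_right_borel_G_space X G sX act \<longleftrightarrow>
     right_borel_G_space X G sX act \<and>
     (\<exists>m. proper_groupoid_family (transformation_arrows X G sX) X
            (\<lambda>(x, \<gamma>). x) (\<lambda>(x, \<gamma>). act x \<gamma>)
            (\<lambda>(x, \<gamma>) (y, \<eta>). (x, mult G \<gamma> \<eta>)) m)"

end

theory Submission
  imports Defs
begin

definition agree :: "nat \<Rightarrow> (nat \<Rightarrow> nat) \<Rightarrow> (nat \<Rightarrow> nat) \<Rightarrow> bool" where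
  "agree k a b \<longleftrightarrow> (\<forall>i<k. a i = b i)"

definition cyl :: "nat list \<Rightarrow> (nat \<Rightarrow> nat) set" where
  "cyl s = {a. \<forall>i<length s. a i = s ! i}"

definition closedN :: "(nat \<Rightarrow> nat) set \<Rightarrow> bool" where
  "closedN F \<longleftrightarrow> (\<forall>a. (\<forall>k. \<exists>b\<in>F. agree k a b) \<longrightarrow> a \<in> F)"

definition ccontN :: "(nat \<Rightarrow> nat) set \<Rightarrow> ((nat \<Rightarrow> nat) \<Rightarrow> (nat \<Rightarrow> nat)) \<Rightarrow> bool" where
  "ccontN F h \<longleftrightarrow> (\<forall>a\<in>F. \<forall>m. \<exists>k. \<forall>b\<in>F. agree k a b \<longrightarrow> agree m (h a) (h b))"

definition ccontR :: "(nat \<Rightarrow> nat) set \<Rightarrow> ((nat \<Rightarrow> nat) \<Rightarrow> real) \<Rightarrow> bool" where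
  "ccontR F h \<longleftrightarrow> (\<forall>a\<in>F. \<forall>e>0. \<exists>k. \<forall>b\<in>F. agree k a b \<longrightarrow> dist (h b) (h a) < e)"

definition SusN :: "(nat \<Rightarrow> nat) set \<Rightarrow> bool" where
  "SusN A \<longleftrightarrow> (\<exists>F h. closedN F \<and> ccontN F h \<and> A = h ` F)"

definition SusR :: "real set \<Rightarrow> bool" where
  "SusR A \<longleftrightarrow> (\<exists>F h. closedN F \<and> ccontR F h \<and> A = h ` F)"

lemma agree_mono: "agree k a b \<Longrightarrow> j \<le> k \<Longrightarrow> agree j a b"
  by (auto simp: agree_def)

lemma agree_sym: "agree k a b \<Longrightarrow> agree k b a"
  by (auto simp: agree_def)

lemma agree_trans: "agree k a b \<Longrightarrow> agree k b c \<Longrightarrow> agree k a c"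
  by (auto simp: agree_def)

lemma SusN_empty: "SusN {}"
  unfolding SusN_def closedN_def ccontN_def by (rule exI[of _ "{}"]) auto

lemma closedN_cyl: "closedN (cyl s)" "closedN (- cyl s)"
proof -
  show "closedN (cyl s)" unfolding closedN_def
  proof (intro allI impI)
    fix a assume "\<forall>k. \<exists>b\<in>cyl s. agree k a b"
    then obtain b where "b \<in> cyl s" "agree (length s) a b" by blast
    then show "a \<in> cyl s" by (auto simp: cyl_def agree_def)
  qed
  show "closedN (- cyl s)" unfolding closedN_def
  proof (intro allI impI)
    fix a assume "\<forall>k. \<exists>b\<in>- cyl s. agree k a b"
    then obtain b where "b \<in> - cyl s" "agree (length s) a b" by blast
    then show "a \<in> - cyl s" by (auto simp: cyl_def agree_def)
  qed
qed

lemma ccontN_id: "ccontN F id"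
  unfolding ccontN_def by auto

lemma SusN_closed: "closedN F \<Longrightarrow> SusN F"
  unfolding SusN_def using ccontN_id by fastforce

definition tlN :: "(nat \<Rightarrow> nat) \<Rightarrow> (nat \<Rightarrow> nat)" where "tlN a = (\<lambda>i. a (Suc i))"
definition consN :: "nat \<Rightarrow> (nat \<Rightarrow> nat) \<Rightarrow> (nat \<Rightarrow> nat)" where
  "consN n b = (\<lambda>i. case i of 0 \<Rightarrow> n | Suc j \<Rightarrow> b j)"

lemma agree_Suc_tl: "agree (Suc k) a b \<Longrightarrow> a 0 = b 0 \<and> agree k (tlN a) (tlN b)"
  by (auto simp: agree_def tlN_def)

lemma SusN_Union:
  fixes A :: "nat \<Rightarrow> (nat \<Rightarrow> nat) set"
  assumes "\<And>n. SusN (A n)"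
  shows "SusN (\<Union>n. A n)"
proof -
  from assms obtain F h where Fh: "\<And>n. closedN (F n) \<and> ccontN (F n) (h n) \<and> A n = h n ` F n"
    unfolding SusN_def by metis
  define G where "G = {a. tlN a \<in> F (a 0)}"
  define H where "H = (\<lambda>a. h (a 0) (tlN a))"
  have "closedN G"
    unfolding closedN_def
  proof (intro allI impI)
    fix a assume a: "\<forall>k. \<exists>b\<in>G. agree k a b"
    have "\<forall>k. \<exists>b\<in>F (a 0). agree k (tlN a) b"
    proof
      fix k
      from a obtain b where b: "b \<in> G" "agree (Suc k) a b" by blast
      then show "\<exists>b\<in>F (a 0). agree k (tlN a) b"
        using agree_Suc_tl[OF b(2)] unfolding G_def by auto
    qed
    then show "a \<in> G" using Fh unfolding closedN_def G_def by auto
  qed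
  moreover have "ccontN G H"
    unfolding ccontN_def
  proof (intro ballI allI)
    fix a m assume a: "a \<in> G"
    then have "tlN a \<in> F (a 0)" by (simp add: G_def)
    then obtain k where k: "\<forall>b\<in>F (a 0). agree k (tlN a) b \<longrightarrow> agree m (h (a 0) (tlN a)) (h (a 0) b)"
      using Fh unfolding ccontN_def by blast
    show "\<exists>k. \<forall>b\<in>G. agree k a b \<longrightarrow> agree m (H a) (H b)"
    proof (intro exI[of _ "Suc k"] ballI impI)
      fix b assume b: "b \<in> G" "agree (Suc k) a b"
      from agree_Suc_tl[OF b(2)] b(1) k show "agree m (H a) (H b)"
        unfolding H_def G_def by auto
    qed
  qed
  moreover have "(\<Union>n. A n) = H ` G"
  proof
    show "H ` G \<subseteq> (\<Union>n. A n)" using Fh by (auto simp: H_def G_def)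
    show "(\<Union>n. A n) \<subseteq> H ` G"
    proof
      fix y assume "y \<in> (\<Union>n. A n)"
      then obtain n b where b: "b \<in> F n" "y = h n b" using Fh by blast
      have t: "tlN (consN n b) = b" "consN n b 0 = n" by (auto simp: tlN_def consN_def)
      then have "consN n b \<in> G" using b by (simp add: G_def)
      moreover have "H (consN n b) = y" using t b by (simp add: H_def)
      ultimately show "y \<in> H ` G" by blast
    qed
  qed
  ultimately show ?thesis unfolding SusN_def by blast
qed

definition decN :: "(nat \<Rightarrow> nat) \<Rightarrow> nat \<Rightarrow> (nat \<Rightarrow> nat)" where
  "decN a n = (\<lambda>k. a (prod_encode (n, k)))"

lemma triangle_mono_le: "a \<le> b \<Longrightarrow> triangle a \<le> triangle b"
  by (induction b) (auto simp: le_Suc_eq)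

lemma prod_encode_mono2: "k < m \<Longrightarrow> prod_encode (n, k) < prod_encode (n, m)"
proof -
  assume "k < m"
  have "triangle (n + k) < triangle (Suc (n + k))" by simp
  also have "\<dots> \<le> triangle (n + m)" using \<open>k < m\<close> by (intro triangle_mono_le) simp
  finally show ?thesis by (simp add: prod_encode_def)
qed

lemma agree_decN: "agree (Suc (prod_encode (n, m))) a b \<Longrightarrow> agree m (decN a n) (decN b n)"
  unfolding agree_def decN_def
  by (metis less_Suc_eq prod_encode_mono2)

lemma SusN_Inter:
  fixes A :: "nat \<Rightarrow> (nat \<Rightarrow> nat) set"
  assumes "\<And>n. SusN (A n)"
  shows "SusN (\<Inter>n. A n)"
proof -
  from assms obtain F h where Fh: "\<And>n. closedN (F n) \<and> ccontN (F n) (h n) \<and> A n = h n ` F n"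
    unfolding SusN_def by metis
  define G where "G = {a. \<forall>n. decN a n \<in> F n \<and> h n (decN a n) = h 0 (decN a 0)}"
  define H where "H = (\<lambda>a. h 0 (decN a 0))"
  have "closedN G"
    unfolding closedN_def
  proof (intro allI impI)
    fix a assume a: "\<forall>k. \<exists>b\<in>G. agree k a b"
    have inF: "decN a n \<in> F n" for n
    proof -
      have "\<forall>m. \<exists>b\<in>F n. agree m (decN a n) b"
      proof
        fix m
        from a obtain b where b: "b \<in> G" "agree (Suc (prod_encode (n, m))) a b" by blast
        then show "\<exists>b\<in>F n. agree m (decN a n) b"
          using agree_decN[OF b(2)] unfolding G_def by auto
      qed
      then show ?thesis using Fh unfolding closedN_def by blast
    qed
    have eq: "h n (decN a n) = h 0 (decN a 0)" for n
    proof (rule ccontr)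
      assume ne: "h n (decN a n) \<noteq> h 0 (decN a 0)"
      then obtain j where j: "h n (decN a n) j \<noteq> h 0 (decN a 0) j" by blast
      obtain k1 where k1: "\<forall>b\<in>F n. agree k1 (decN a n) b \<longrightarrow> agree (Suc j) (h n (decN a n)) (h n b)"
        using Fh inF unfolding ccontN_def by blast
      obtain k0 where k0: "\<forall>b\<in>F 0. agree k0 (decN a 0) b \<longrightarrow> agree (Suc j) (h 0 (decN a 0)) (h 0 b)"
        using Fh inF unfolding ccontN_def by blast
      define K where "K = max (Suc (prod_encode (n, k1))) (Suc (prod_encode (0, k0)))"
      from a obtain b where b: "b \<in> G" "agree K a b" by blast
      have "agree k1 (decN a n) (decN b n)"
        by (rule agree_decN, rule agree_mono[OF b(2)]) (simp add: K_def)
      with k1 b(1) have 1: "agree (Suc j) (h n (decN a n)) (h n (decN b n))"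
        unfolding G_def by blast
      have "agree k0 (decN a 0) (decN b 0)"
        by (rule agree_decN, rule agree_mono[OF b(2)]) (simp add: K_def)
      with k0 b(1) have 2: "agree (Suc j) (h 0 (decN a 0)) (h 0 (decN b 0))"
        unfolding G_def by blast
      have 3: "h n (decN b n) = h 0 (decN b 0)" using b(1) unfolding G_def by blast
      from 1 2 3 j show False unfolding agree_def by auto
    qed
    show "a \<in> G" using inF eq unfolding G_def by blast
  qed
  moreover have "ccontN G H"
    unfolding ccontN_def
  proof (intro ballI allI)
    fix a m assume a: "a \<in> G"
    then have "decN a 0 \<in> F 0" by (simp add: G_def)
    then obtain k where k: "\<forall>b\<in>F 0. agree k (decN a 0) b \<longrightarrow> agree m (h 0 (decN a 0)) (h 0 b)"
      using Fh unfolding ccontN_def by blast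
    show "\<exists>k. \<forall>b\<in>G. agree k a b \<longrightarrow> agree m (H a) (H b)"
    proof (intro exI[of _ "Suc (prod_encode (0, k))"] ballI impI)
      fix b assume b: "b \<in> G" "agree (Suc (prod_encode (0, k))) a b"
      from agree_decN[OF b(2)] b(1) k show "agree m (H a) (H b)"
        unfolding H_def G_def by auto
    qed
  qed
  moreover have "(\<Inter>n. A n) = H ` G"
  proof
    show "H ` G \<subseteq> (\<Inter>n. A n)"
    proof
      fix y assume "y \<in> H ` G"
      then obtain a where a: "a \<in> G" "y = H a" by blast
      show "y \<in> (\<Inter>n. A n)"
      proof (rule INT_I)
        fix n assume "n \<in> (UNIV::nat set)"
        have an: "decN a n \<in> F n \<and> h n (decN a n) = h 0 (decN a 0)" using a(1) unfolding G_def by blast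
        then have yn: "y = h n (decN a n)" "decN a n \<in> F n" using a(2) unfolding H_def by auto
        show "y \<in> A n" using yn Fh by auto
      qed
    qed
    show "(\<Inter>n. A n) \<subseteq> H ` G"
    proof
      fix y assume y: "y \<in> (\<Inter>n. A n)"
      have "\<forall>n. \<exists>b. b \<in> F n \<and> h n b = y"
      proof
        fix n from y have "y \<in> A n" by blast
        then show "\<exists>b. b \<in> F n \<and> h n b = y" using Fh by auto
      qed
      then obtain bb where bb: "\<And>n. bb n \<in> F n \<and> h n (bb n) = y" by metis
      define a where "a = (\<lambda>j. case prod_decode j of (n, k) \<Rightarrow> bb n k)"
      have d: "decN a n = bb n" for n by (simp add: a_def decN_def)
      have "a \<in> G" using bb by (simp add: G_def d)
      moreover have "H a = y" using bb by (simp add: H_def d)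
      ultimately show "y \<in> H ` G" by blast
    qed
  qed
  ultimately show ?thesis unfolding SusN_def by blast
qed

lemma sigma_SusN: "W \<in> sigma_sets UNIV (range cyl) \<Longrightarrow> SusN W \<and> SusN (- W)"
proof (induction rule: sigma_sets.induct)
  case (Basic a)
  then obtain t where t: "a = cyl t" by blast
  show ?case unfolding t using closedN_cyl[of t] by (simp add: SusN_closed)
next
  case Empty
  have u: "(UNIV :: (nat \<Rightarrow> nat) set) = cyl []" by (simp add: cyl_def)
  have "SusN (cyl [])" using closedN_cyl(1) by (rule SusN_closed)
  then have "SusN UNIV" by (simp only: u)
  then show ?case using SusN_empty by simp
next
  case (Compl a)
  have e: "UNIV - a = - a" by auto
  show ?case unfolding e double_compl using Compl by simp
next
  case (Union A)
  have 1: "SusN (\<Union>i. A i)" by (rule SusN_Union) (use Union in blast)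
  have 2: "- (\<Union>i. A i) = (\<Inter>i. - A i)" by auto
  have 3: "SusN (\<Inter>i. - A i)" by (rule SusN_Inter) (use Union in blast)
  show ?case using 1 2 3 by simp
qed

lemma SusR_image:
  assumes "SusN W" "ccontR UNIV g"
  shows "SusR (g ` W)"
proof -
  from assms(1) obtain F h where F: "closedN F" "ccontN F h" "W = h ` F" unfolding SusN_def by blast
  have "ccontR F (g \<circ> h)"
    unfolding ccontR_def
  proof (intro ballI allI impI)
    fix a and e :: real assume a: "a \<in> F" and e: "e > 0"
    obtain m where m: "\<forall>b. agree m (h a) b \<longrightarrow> dist (g b) (g (h a)) < e"
      using assms(2) e unfolding ccontR_def by blast
    obtain k where k: "\<forall>b\<in>F. agree k a b \<longrightarrow> agree m (h a) (h b)"
      using F(2) a unfolding ccontN_def by blast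
    show "\<exists>k. \<forall>b\<in>F. agree k a b \<longrightarrow> dist ((g \<circ> h) b) ((g \<circ> h) a) < e"
      using m k by auto
  qed
  moreover have "g ` W = (g \<circ> h) ` F" using F(3) by auto
  ultimately show ?thesis using F(1) unfolding SusR_def by blast
qed

definition Mc :: "(nat \<Rightarrow> nat) measure" where "Mc = sigma UNIV (range cyl)"

lemma sets_Mc: "sets Mc = sigma_sets UNIV (range cyl)"
  unfolding Mc_def by (rule sets_measure_of) auto

lemma space_Mc[simp]: "space Mc = UNIV"
  unfolding Mc_def by (rule space_measure_of_conv)

lemma cyl_prefix: "b \<in> cyl (map a [0..<k]) \<longleftrightarrow> agree k a b"
  by (auto simp: cyl_def agree_def)

lemma open_union_cyl:
  assumes "\<And>a. a \<in> S \<Longrightarrow> \<exists>k. \<forall>b. agree k a b \<longrightarrow> b \<in> S"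
  shows "S \<in> sets Mc"
proof -
  have "S = \<Union>{cyl s | s. cyl s \<subseteq> S}"
  proof
    show "S \<subseteq> \<Union>{cyl s | s. cyl s \<subseteq> S}"
    proof
      fix a assume "a \<in> S"
      then obtain k where k: "\<forall>b. agree k a b \<longrightarrow> b \<in> S" using assms by blast
      then have "cyl (map a [0..<k]) \<subseteq> S" by (auto simp: cyl_prefix)
      moreover have "a \<in> cyl (map a [0..<k])" by (simp add: cyl_prefix agree_def)
      ultimately show "a \<in> \<Union>{cyl s | s. cyl s \<subseteq> S}" by blast
    qed
  qed auto
  moreover have "\<Union>{cyl s | s. cyl s \<subseteq> S} \<in> sets Mc"
  proof (rule sets.countable_Union)
    have "{cyl s | s. cyl s \<subseteq> S} \<subseteq> cyl ` UNIV" by auto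
    then show "countable {cyl s | s. cyl s \<subseteq> S}"
      by (rule countable_subset) simp
    show "{cyl s | s. cyl s \<subseteq> S} \<subseteq> sets Mc" by (auto simp: sets_Mc)
  qed
  ultimately show ?thesis by simp
qed

lemma ccontR_meas: "ccontR UNIV g \<Longrightarrow> g \<in> borel_measurable Mc"
proof (rule borel_measurableI)
  fix S :: "real set" assume g: "ccontR UNIV g" and S: "open S"
  show "g -` S \<inter> space Mc \<in> sets Mc"
  proof (rule open_union_cyl)
    fix a assume "a \<in> g -` S \<inter> space Mc"
    then have "g a \<in> S" by simp
    then obtain e where e: "e > 0" "ball (g a) e \<subseteq> S" using S open_contains_ball by blast
    then obtain k where "\<forall>b. agree k a b \<longrightarrow> dist (g b) (g a) < e" using g unfolding ccontR_def by blast
    then show "\<exists>k. \<forall>b. agree k a b \<longrightarrow> b \<in> g -` S \<inter> space Mc"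
      using e by (auto simp: dist_commute subset_iff)
  qed
qed

lemma ccontN_meas:
  assumes g: "ccontN UNIV g"
  shows "g \<in> Mc \<rightarrow>\<^sub>M Mc"
proof -
  have "g \<in> Mc \<rightarrow>\<^sub>M measure_of UNIV (range cyl) (\<lambda>_. 0)"
  proof (rule measurable_measure_of)
    show "range cyl \<subseteq> Pow UNIV" by auto
    show "g \<in> space Mc \<rightarrow> UNIV" by auto
    fix y assume "y \<in> range cyl"
    then obtain t where t: "y = cyl t" by blast
    show "g -` y \<inter> space Mc \<in> sets Mc"
    proof (rule open_union_cyl)
      fix a assume "a \<in> g -` y \<inter> space Mc"
      then have ga: "g a \<in> cyl t" using t by simp
      obtain k where k: "\<forall>b. agree k a b \<longrightarrow> agree (length t) (g a) (g b)"
        using g unfolding ccontN_def by blast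
      show "\<exists>k. \<forall>b. agree k a b \<longrightarrow> b \<in> g -` y \<inter> space Mc"
      proof (intro exI[of _ k] allI impI)
        fix b assume "agree k a b"
        then have "agree (length t) (g a) (g b)" using k by blast
        then show "b \<in> g -` y \<inter> space Mc" using ga t by (auto simp: cyl_def agree_def)
      qed
    qed
  qed
  then show ?thesis by (simp add: Mc_def)
qed

lemma cont_ccontR:
  fixes h :: "(nat \<Rightarrow> nat) \<Rightarrow> real"
  assumes h: "continuous_on UNIV h"
  shows "ccontR UNIV h"
  unfolding ccontR_def
proof (intro ballI allI impI, rule ccontr)
  fix a and e :: real assume e: "e > 0" and "\<not> (\<exists>k. \<forall>b\<in>UNIV. agree k a b \<longrightarrow> dist (h b) (h a) < e)"
  then have "\<forall>k. \<exists>b. agree k a b \<and> dist (h b) (h a) \<ge> e" by (auto simp: not_less)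
  then obtain B where B: "\<And>k. agree k a (B k) \<and> dist (h (B k)) (h a) \<ge> e" by metis
  have "limitin (product_topology (\<lambda>i. euclidean) UNIV) B a sequentially"
    unfolding limitin_componentwise
  proof (intro conjI ballI)
    show "a \<in> extensional UNIV" by simp
    show "\<forall>\<^sub>F x in sequentially. B x \<in> topspace (product_topology (\<lambda>i. euclidean) UNIV)" by simp
    fix i :: nat
    have "\<forall>\<^sub>F k in sequentially. B k i = a i"
      unfolding eventually_sequentially
    proof (intro exI[of _ "Suc i"] allI impI)
      fix k assume "Suc i \<le> k"
      then show "B k i = a i" using B[of k] unfolding agree_def by simp
    qed
    then have "((\<lambda>k. B k i) \<longlongrightarrow> a i) sequentially" by (rule tendsto_eventually)
    then show "limitin euclidean (\<lambda>c. B c i) (a i) sequentially" by (simp add: limitin_canonical_iff)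
  qed
  then have "B \<longlonglongrightarrow> a" by (simp add: euclidean_product_topology limitin_canonical_iff)
  moreover have "open (h -` ball (h a) e)"
    using h by (simp add: continuous_on_open_vimage[OF open_UNIV])
  moreover have "a \<in> h -` ball (h a) e" using e by simp
  ultimately have "\<forall>\<^sub>F k in sequentially. B k \<in> h -` ball (h a) e"
    by (rule topological_tendstoD)
  then obtain k where "dist (h (B k)) (h a) < e"
    by (auto simp: eventually_sequentially dist_commute)
  with B show False by (simp add: not_le[symmetric])
qed


definition sepR :: "real set \<Rightarrow> real set \<Rightarrow> bool" where
  "sepR P Q \<longleftrightarrow> (\<exists>C\<in>sets borel. P \<subseteq> C \<and> C \<inter> Q = {})"

lemma sepR_Union:
  fixes P Q :: "nat \<Rightarrow> real set"
  assumes "\<And>i j. sepR (P i) (Q j)"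
  shows "sepR (\<Union>i. P i) (\<Union>j. Q j)"
proof -
  from assms obtain C where C: "\<And>i j. C i j \<in> sets borel \<and> P i \<subseteq> C i j \<and> C i j \<inter> Q j = {}"
    unfolding sepR_def by metis
  define D where "D = (\<Union>i. \<Inter>j. C i j)"
  have "D \<in> sets borel" unfolding D_def using C by blast
  moreover have "(\<Union>i. P i) \<subseteq> D" unfolding D_def using C by blast
  moreover have "D \<inter> (\<Union>j. Q j) = {}" unfolding D_def using C by blast
  ultimately show ?thesis unfolding sepR_def by blast
qed

lemma sepR_empty: "sepR {} Q" "sepR P {}"
proof -
  show "sepR {} Q" unfolding sepR_def by (rule bexI[of _ "{}"]) auto
  show "sepR P {}" unfolding sepR_def by (rule bexI[of _ UNIV]) auto
qed

lemma cyl_snoc: "cyl s = (\<Union>n. cyl (s @ [n]))"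
proof
  show "cyl s \<subseteq> (\<Union>n. cyl (s @ [n]))"
  proof
    fix a assume a: "a \<in> cyl s"
    have "a \<in> cyl (s @ [a (length s)])"
      using a unfolding cyl_def by (auto simp: nth_append less_Suc_eq)
    then show "a \<in> (\<Union>n. cyl (s @ [n]))" by blast
  qed
  show "(\<Union>n. cyl (s @ [n])) \<subseteq> cyl s"
    unfolding cyl_def by (auto simp: nth_append)
qed

primrec build :: "(nat list \<times> nat list \<Rightarrow> nat \<times> nat) \<Rightarrow> nat \<Rightarrow> nat list \<times> nat list" where
  "build f 0 = ([], [])"
| "build f (Suc i) = (fst (build f i) @ [fst (f (build f i))], snd (build f i) @ [snd (f (build f i))])"

lemma build_len: "length (fst (build f i)) = i" "length (snd (build f i)) = i"
  by (induction i) auto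

lemma build_map:
  "fst (build f i) = map (\<lambda>j. fst (build f (Suc j)) ! j) [0..<i]"
  "snd (build f i) = map (\<lambda>j. snd (build f (Suc j)) ! j) [0..<i]"
  by (induction i) (auto simp: build_len nth_append)

lemma SusR_sep:
  assumes "SusR A" "SusR B" "A \<inter> B = {}"
  shows "sepR A B"
proof (rule ccontr)
  assume nsep: "\<not> sepR A B"
  from assms(1) obtain F h where F: "closedN F" "ccontR F h" "A = h ` F" unfolding SusR_def by blast
  from assms(2) obtain F' k where F': "closedN F'" "ccontR F' k" "B = k ` F'" unfolding SusR_def by blast
  define AS where "AS s = h ` (F \<inter> cyl s)" for s
  define BS where "BS t = k ` (F' \<inter> cyl t)" for t
  have AS_U: "AS s = (\<Union>n. AS (s @ [n]))" for s
    unfolding AS_def by (subst cyl_snoc) blast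
  have BS_U: "BS t = (\<Union>n. BS (t @ [n]))" for t
    unfolding BS_def by (subst cyl_snoc) blast
  have step: "\<exists>nm. \<not> sepR (AS (s @ [fst nm])) (BS (t @ [snd nm]))" if ns: "\<not> sepR (AS s) (BS t)" for s t
  proof (rule ccontr)
    assume "\<not> (\<exists>nm. \<not> sepR (AS (s @ [fst nm])) (BS (t @ [snd nm])))"
    then have "\<And>i j. sepR (AS (s @ [i])) (BS (t @ [j]))" by (metis fst_conv snd_conv)
    then have "sepR (\<Union>i. AS (s @ [i])) (\<Union>j. BS (t @ [j]))" by (rule sepR_Union)
    with ns show False by (simp add: AS_U[symmetric] BS_U[symmetric])
  qed
  define nx where "nx p = (SOME nm. \<not> sepR (AS (fst p @ [fst nm])) (BS (snd p @ [snd nm])))" for p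
  define sq where "sq = build nx"
  have inv: "\<not> sepR (AS (fst (sq i))) (BS (snd (sq i)))" for i
  proof (induction i)
    case 0
    have "cyl [] = UNIV" by (simp add: cyl_def)
    then show ?case using nsep F(3) F'(3) by (simp add: sq_def AS_def BS_def)
  next
    case (Suc i)
    from someI_ex[OF step[OF Suc]] show ?case
      by (simp add: sq_def nx_def)
  qed
  define al where "al j = fst (sq (Suc j)) ! j" for j
  define be where "be j = snd (sq (Suc j)) ! j" for j
  have sqa: "fst (sq i) = map al [0..<i]" for i unfolding al_def sq_def by (rule build_map)
  have sqb: "snd (sq i) = map be [0..<i]" for i unfolding be_def sq_def by (rule build_map)
  have ne: "AS (fst (sq i)) \<noteq> {}" "BS (snd (sq i)) \<noteq> {}" for i
    using inv[of i] sepR_empty by auto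
  have "\<forall>i. \<exists>b\<in>F. agree i al b"
  proof
    fix i from ne(1)[of i] obtain b where "b \<in> F" "b \<in> cyl (map al [0..<i])"
      unfolding AS_def sqa by blast
    then show "\<exists>b\<in>F. agree i al b" by (auto simp: cyl_prefix)
  qed
  then have "al \<in> F" using F(1) unfolding closedN_def by blast
  have "\<forall>i. \<exists>b\<in>F'. agree i be b"
  proof
    fix i from ne(2)[of i] obtain b where "b \<in> F'" "b \<in> cyl (map be [0..<i])"
      unfolding BS_def sqb by blast
    then show "\<exists>b\<in>F'. agree i be b" by (auto simp: cyl_prefix)
  qed
  then have "be \<in> F'" using F'(1) unfolding closedN_def by blast
  have "h al \<noteq> k be" using assms(3) F(3) F'(3) \<open>al \<in> F\<close> \<open>be \<in> F'\<close> by blast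
  define e where "e = dist (h al) (k be) / 2"
  have e: "e > 0" using \<open>h al \<noteq> k be\<close> by (simp add: e_def)
  obtain k1 where k1: "\<forall>b\<in>F. agree k1 al b \<longrightarrow> dist (h b) (h al) < e"
    using F(2) \<open>al \<in> F\<close> e unfolding ccontR_def by blast
  obtain k2 where k2: "\<forall>b\<in>F'. agree k2 be b \<longrightarrow> dist (k b) (k be) < e"
    using F'(2) \<open>be \<in> F'\<close> e unfolding ccontR_def by blast
  define i where "i = max k1 k2"
  have sub1: "AS (fst (sq i)) \<subseteq> ball (h al) e"
  proof
    fix y assume "y \<in> AS (fst (sq i))"
    then obtain b where b: "b \<in> F" "agree i al b" "y = h b"
      unfolding AS_def sqa by (auto simp: cyl_prefix)
    have "agree k1 al b" using agree_mono[OF b(2)] by (simp add: i_def)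
    then have "dist (h b) (h al) < e" using k1 b by blast
    then show "y \<in> ball (h al) e" using b by (simp add: dist_commute)
  qed
  have sub2: "BS (snd (sq i)) \<subseteq> ball (k be) e"
  proof
    fix y assume "y \<in> BS (snd (sq i))"
    then obtain b where b: "b \<in> F'" "agree i be b" "y = k b"
      unfolding BS_def sqb by (auto simp: cyl_prefix)
    have "agree k2 be b" using agree_mono[OF b(2)] by (simp add: i_def)
    then have "dist (k b) (k be) < e" using k2 b by blast
    then show "y \<in> ball (k be) e" using b by (simp add: dist_commute)
  qed
  have disj: "ball (h al) e \<inter> ball (k be) e = {}"
  proof (rule ccontr)
    assume "ball (h al) e \<inter> ball (k be) e \<noteq> {}"
    then obtain y where "dist (h al) y < e" "dist (k be) y < e" by auto
    then have "dist (h al) (k be) < 2 * e" using dist_triangle3[of "h al" "k be" y] by (simp add: dist_commute)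
    then show False by (simp add: e_def)
  qed
  have "sepR (AS (fst (sq i))) (BS (snd (sq i)))"
    unfolding sepR_def using sub1 sub2 disj by (intro bexI[of _ "ball (h al) e"]) auto
  with inv show False by blast
qed


definition evN :: "(nat \<Rightarrow> nat) \<Rightarrow> (nat \<Rightarrow> nat)" where "evN a = (\<lambda>i. a (2 * i))"
definition odN :: "(nat \<Rightarrow> nat) \<Rightarrow> (nat \<Rightarrow> nat)" where "odN a = (\<lambda>i. a (2 * i + 1))"
definition ilN :: "(nat \<Rightarrow> nat) \<Rightarrow> (nat \<Rightarrow> nat) \<Rightarrow> (nat \<Rightarrow> nat)" where
  "ilN a b = (\<lambda>j. if even j then a (j div 2) else b (j div 2))"

lemma evN_ilN[simp]: "evN (ilN a b) = a" and odN_ilN[simp]: "odN (ilN a b) = b"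
  by (auto simp: evN_def odN_def ilN_def)

lemma ccontN_evN: "ccontN UNIV evN"
  unfolding ccontN_def
proof (intro ballI allI)
  fix a m show "\<exists>k. \<forall>b\<in>UNIV. agree k a b \<longrightarrow> agree m (evN a) (evN b)"
    by (rule exI[of _ "2 * m"]) (auto simp: agree_def evN_def)
qed

lemma ccontN_odN: "ccontN UNIV odN"
  unfolding ccontN_def
proof (intro ballI allI)
  fix a m show "\<exists>k. \<forall>b\<in>UNIV. agree k a b \<longrightarrow> agree m (odN a) (odN b)"
    by (rule exI[of _ "2 * m"]) (auto simp: agree_def odN_def)
qed

lemma ccontR_comp: "ccontR UNIV g \<Longrightarrow> ccontN UNIV e \<Longrightarrow> ccontR UNIV (g \<circ> e)"
  unfolding ccontR_def ccontN_def by simp metis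

lemma analytic_data:
  assumes "analytic_borel_space M"
  obtains f g where "f \<in> M \<rightarrow>\<^sub>M borel" "inj_on f (space M)"
    "analytic_real_set (f ` space M)"
    "g \<in> restrict_space borel (f ` space M) \<rightarrow>\<^sub>M M"
    "\<And>x. x \<in> space M \<Longrightarrow> g (f x) = x"
  using assms unfolding analytic_borel_space_def by blast

lemma graph_measurable:
  fixes X :: "'x measure" and Y :: "'y measure"
  assumes aX: "analytic_borel_space X" and aY: "analytic_borel_space Y"
    and phi: "\<And>x. x \<in> space X \<Longrightarrow> phi x \<in> space Y"
    and Gam: "{p \<in> space (X \<Otimes>\<^sub>M Y). snd p = phi (fst p)} \<in> sets (X \<Otimes>\<^sub>M Y)"
  shows "phi \<in> X \<rightarrow>\<^sub>M Y"
proof -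
  obtain fX gX where fX: "fX \<in> X \<rightarrow>\<^sub>M borel" "inj_on fX (space X)"
    "analytic_real_set (fX ` space X)" "gX \<in> restrict_space borel (fX ` space X) \<rightarrow>\<^sub>M X"
    "\<And>x. x \<in> space X \<Longrightarrow> gX (fX x) = x"
    using analytic_data[OF aX] by metis
  obtain fY gY where fY: "fY \<in> Y \<rightarrow>\<^sub>M borel" "inj_on fY (space Y)"
    "analytic_real_set (fY ` space Y)" "gY \<in> restrict_space borel (fY ` space Y) \<rightarrow>\<^sub>M Y"
    "\<And>x. x \<in> space Y \<Longrightarrow> gY (fY x) = x"
    using analytic_data[OF aY] by metis
  have fgX: "a \<in> fX ` space X \<Longrightarrow> fX (gX a) = a" for a using fX(5) by auto
  have fgY: "a \<in> fY ` space Y \<Longrightarrow> fY (gY a) = a" for a using fY(5) by auto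
  define F where "F x = fY (phi x)" for x
  have Fmeas: "F \<in> borel_measurable X"
  proof (rule borel_measurableI_less)
    fix t :: real
    define P where "P = {x \<in> space X. F x < t}"
    show "{x \<in> space X. F x < t} \<in> sets X"
    proof (cases "space X = {}")
      case True
      then show ?thesis by simp
    next
      case False
      then obtain x0 where x0: "x0 \<in> space X" by blast
      have neX: "fX ` space X \<noteq> {}" using False by simp
      have neY: "fY ` space Y \<noteq> {}" using phi[OF x0] by auto
      obtain hX :: "(nat \<Rightarrow> nat) \<Rightarrow> real" where hX: "continuous_on UNIV hX" "range hX = fX ` space X"
        using fX(3) neX unfolding analytic_real_set_def by blast
      obtain hY :: "(nat \<Rightarrow> nat) \<Rightarrow> real" where hY: "continuous_on UNIV hY" "range hY = fY ` space Y"
        using fY(3) neY unfolding analytic_real_set_def by blast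
      have chX: "ccontR UNIV hX" by (rule cont_ccontR[OF hX(1)])
      have chY: "ccontR UNIV hY" by (rule cont_ccontR[OF hY(1)])
      have pX: "(\<lambda>a. gX (hX a)) \<in> Mc \<rightarrow>\<^sub>M X"
      proof (rule measurable_comp[OF _ fX(4), unfolded comp_def])
        show "hX \<in> Mc \<rightarrow>\<^sub>M restrict_space borel (fX ` space X)"
          using ccontR_meas[OF chX] hX(2) by (intro measurable_restrict_space2) auto
      qed
      have pY: "(\<lambda>a. gY (hY a)) \<in> Mc \<rightarrow>\<^sub>M Y"
      proof (rule measurable_comp[OF _ fY(4), unfolded comp_def])
        show "hY \<in> Mc \<rightarrow>\<^sub>M restrict_space borel (fY ` space Y)"
          using ccontR_meas[OF chY] hY(2) by (intro measurable_restrict_space2) auto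
      qed
      define Pi where "Pi a = (gX (hX (evN a)), gY (hY (odN a)))" for a
      have Pim: "Pi \<in> Mc \<rightarrow>\<^sub>M X \<Otimes>\<^sub>M Y"
        unfolding Pi_def
        by (intro measurable_Pair measurable_comp[OF ccontN_meas[OF ccontN_evN] pX, unfolded comp_def]
              measurable_comp[OF ccontN_meas[OF ccontN_odN] pY, unfolded comp_def])
      define Gam where "Gam = {p \<in> space (X \<Otimes>\<^sub>M Y). snd p = phi (fst p)}"
      have fYs: "(\<lambda>p. fY (snd p)) \<in> borel_measurable (X \<Otimes>\<^sub>M Y)"
        by (rule measurable_comp[OF measurable_snd fY(1), unfolded comp_def])
      define Lt where "Lt = (\<lambda>p. fY (snd p)) -` {..<t} \<inter> space (X \<Otimes>\<^sub>M Y)"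
      have Lt: "Lt \<in> sets (X \<Otimes>\<^sub>M Y)" unfolding Lt_def by (rule measurable_sets[OF fYs]) simp
      define G1 where "G1 = Gam \<inter> Lt"
      define G2 where "G2 = Gam - Lt"
      have G12: "G1 \<in> sets (X \<Otimes>\<^sub>M Y)" "G2 \<in> sets (X \<Otimes>\<^sub>M Y)"
        using Gam Lt unfolding G1_def G2_def Gam_def by auto
      define W1 where "W1 = Pi -` G1 \<inter> space Mc"
      define W2 where "W2 = Pi -` G2 \<inter> space Mc"
      have W12: "W1 \<in> sets Mc" "W2 \<in> sets Mc"
        unfolding W1_def W2_def using measurable_sets[OF Pim] G12 by auto
      have S12: "SusR ((hX \<circ> evN) ` W1)" "SusR ((hX \<circ> evN) ` W2)"
        using SusR_image[OF conjunct1[OF sigma_SusN] ccontR_comp[OF chX ccontN_evN]] W12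
        by (auto simp: sets_Mc)
      have key: "fX ` {x \<in> space X. (F x < t) = b} = (hX \<circ> evN) ` (Pi -` {p \<in> Gam. (p \<in> Lt) = b})" for b
      proof
        show "fX ` {x \<in> space X. (F x < t) = b} \<subseteq> (hX \<circ> evN) ` (Pi -` {p \<in> Gam. (p \<in> Lt) = b})"
        proof
          fix y assume "y \<in> fX ` {x \<in> space X. (F x < t) = b}"
          then obtain x where x: "x \<in> space X" "(F x < t) = b" "y = fX x" by blast
          obtain al where al: "hX al = fX x" using hX(2) x(1)
            by (metis UNIV_I imageE image_eqI)
          obtain be where be: "hY be = fY (phi x)" using hY(2) phi[OF x(1)]
            by (metis UNIV_I imageE image_eqI)
          have "Pi (ilN al be) = (x, phi x)"
            using al be fX(5)[OF x(1)] fY(5)[OF phi[OF x(1)]] by (simp add: Pi_def)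
          moreover have "(x, phi x) \<in> Gam" using x(1) phi[OF x(1)]
            by (simp add: Gam_def space_pair_measure)
          moreover have "((x, phi x) \<in> Lt) = b"
            using x phi[OF x(1)] by (auto simp: Lt_def F_def space_pair_measure)
          ultimately have "ilN al be \<in> Pi -` {p \<in> Gam. (p \<in> Lt) = b}" by simp
          moreover have "(hX \<circ> evN) (ilN al be) = y" using al x by simp
          ultimately show "y \<in> (hX \<circ> evN) ` (Pi -` {p \<in> Gam. (p \<in> Lt) = b})" by blast
        qed
        show "(hX \<circ> evN) ` (Pi -` {p \<in> Gam. (p \<in> Lt) = b}) \<subseteq> fX ` {x \<in> space X. (F x < t) = b}"
        proof
          fix y assume "y \<in> (hX \<circ> evN) ` (Pi -` {p \<in> Gam. (p \<in> Lt) = b})"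
          then obtain c where c: "Pi c \<in> Gam" "(Pi c \<in> Lt) = b" "y = hX (evN c)" by auto
          define x where "x = gX (hX (evN c))"
          have px: "Pi c = (x, gY (hY (odN c)))" by (simp add: Pi_def x_def)
          have x: "x \<in> space X" and ph: "gY (hY (odN c)) = phi x"
            using c(1) unfolding px Gam_def by (auto simp: space_pair_measure)
          have "(F x < t) = b"
            using c(2) unfolding px Lt_def F_def ph using x phi[OF x] by (auto simp: space_pair_measure)
          moreover have "fX x = y" unfolding x_def c(3)
            by (rule fgX) (use hX(2) in blast)
          ultimately show "y \<in> fX ` {x \<in> space X. (F x < t) = b}" using x by blast
        qed
      qed
      have e1: "Pi -` {p \<in> Gam. (p \<in> Lt) = True} = W1"
        by (auto simp: W1_def G1_def)
      have e2: "Pi -` {p \<in> Gam. (p \<in> Lt) = False} = W2"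
        by (auto simp: W2_def G2_def)
      have k1: "fX ` P = (hX \<circ> evN) ` W1" using key[of True] unfolding e1 P_def by simp
      have k2: "fX ` (space X - P) = (hX \<circ> evN) ` W2"
      proof -
        have "space X - P = {x \<in> space X. (F x < t) = False}" by (auto simp: P_def)
        then show ?thesis using key[of False] unfolding e2 by simp
      qed
      have "fX ` P \<inter> fX ` (space X - P) = {}"
        using fX(2) unfolding inj_on_def P_def by blast
      then have "sepR (fX ` P) (fX ` (space X - P))"
        using SusR_sep S12 k1 k2 by simp
      then obtain C where C: "C \<in> sets borel" "fX ` P \<subseteq> C" "C \<inter> fX ` (space X - P) = {}"
        unfolding sepR_def by blast
      have "P = fX -` C \<inter> space X"
        using C(2,3) by (auto simp: P_def)
      moreover have "fX -` C \<inter> space X \<in> sets X" by (rule measurable_sets[OF fX(1) C(1)])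
      ultimately show ?thesis by (simp add: P_def)
    qed
  qed
  have Fr: "F \<in> X \<rightarrow>\<^sub>M restrict_space borel (fY ` space Y)"
    using Fmeas phi by (intro measurable_restrict_space2) (auto simp: F_def)
  have "(\<lambda>x. gY (F x)) \<in> X \<rightarrow>\<^sub>M Y"
    by (rule measurable_comp[OF Fr fY(4), unfolded comp_def])
  then show ?thesis
    by (rule measurable_cong[THEN iffD1, rotated]) (simp add: F_def fY(5) phi)
qed


theorem lemma3p4:
  fixes X :: "'x measure" and G :: "('g, 'b) groupoid_scheme"
    and sX :: "'x \<Rightarrow> 'g" and act :: "'x \<Rightarrow> 'g \<Rightarrow> 'x"
  assumes "borel_groupoid G"
    and "right_borel_G_space X G sX act"
    and "free_action X G sX act"
    and "\<exists>c \<in> orbit_space X G sX act \<rightarrow>\<^sub>M X.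
           \<forall>Q \<in> space (orbit_space X G sX act). orbit X G sX act (c Q) = Q"
  shows "proper_right_borel_G_space X G sX act"
proof -
  define Ga where "Ga = space (arrows G)"
  define D where "D = action_domain X G sX"
  have D_iff: "(x, g) \<in> D \<longleftrightarrow> x \<in> space X \<and> g \<in> Ga \<and> sX x = rng G g" for x g
    by (simp add: D_def Ga_def action_domain_def)
  have G_an: "analytic_borel_space (arrows G)" using assms(1) unfolding borel_groupoid_def by blast
  have G_us: "units G \<subseteq> Ga" using assms(1) unfolding borel_groupoid_def Ga_def by blast
  have G_rs: "rng G g \<in> units G" "src G g \<in> units G" if "g \<in> Ga" for g
    using assms(1) that unfolding borel_groupoid_def Ga_def by blast+
  have G_unit: "rng G u = u" "src G u = u" if "u \<in> units G" for u
    using assms(1) that unfolding borel_groupoid_def by blast+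
  have G_mult: "mult G g h \<in> Ga" "rng G (mult G g h) = rng G g" "src G (mult G g h) = src G h"
    if "g \<in> Ga" "h \<in> Ga" "src G g = rng G h" for g h
  proof -
    have "(g, h) \<in> composable G" using that by (simp add: composable_def Ga_def)
    then show "mult G g h \<in> Ga" "rng G (mult G g h) = rng G g" "src G (mult G g h) = src G h"
      using assms(1) unfolding borel_groupoid_def Ga_def by blast+
  qed
  have G_assoc: "mult G (mult G g h) k = mult G g (mult G h k)"
    if "g \<in> Ga" "h \<in> Ga" "k \<in> Ga" "src G g = rng G h" "src G h = rng G k" for g h k
    using assms(1) that unfolding borel_groupoid_def Ga_def by blast
  have G_id: "mult G (rng G g) g = g" "mult G g (src G g) = g" if "g \<in> Ga" for g
    using assms(1) that unfolding borel_groupoid_def Ga_def by blast+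
  have G_inv: "ginv G g \<in> Ga" "rng G (ginv G g) = src G g" "src G (ginv G g) = rng G g"
    "mult G g (ginv G g) = rng G g" "mult G (ginv G g) g = src G g" if "g \<in> Ga" for g
    using assms(1) that unfolding borel_groupoid_def Ga_def by blast+
  have G_inv_meas: "ginv G \<in> arrows G \<rightarrow>\<^sub>M arrows G"
    using assms(1) unfolding borel_groupoid_def by blast
  have G_mult_meas: "(\<lambda>(g, h). mult G g h) \<in> restrict_space (arrows G \<Otimes>\<^sub>M arrows G) (composable G) \<rightarrow>\<^sub>M arrows G"
    using assms(1) unfolding borel_groupoid_def by blast
  have G_rng_meas: "rng G \<in> arrows G \<rightarrow>\<^sub>M arrows G"
    using assms(1) unfolding borel_groupoid_def by blast
  have X_an: "analytic_borel_space X" using assms(2) unfolding right_borel_G_space_def by blast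
  have X_sX_meas: "sX \<in> X \<rightarrow>\<^sub>M arrows G" using assms(2) unfolding right_borel_G_space_def by blast
  have X_sX: "sX x \<in> units G" if "x \<in> space X" for x
    using assms(2) that unfolding right_borel_G_space_def by blast
  have X_act_meas: "(\<lambda>(x, g). act x g) \<in> restrict_space (X \<Otimes>\<^sub>M arrows G) D \<rightarrow>\<^sub>M X"
    using assms(2) unfolding right_borel_G_space_def D_def by blast
  have X_act: "act x g \<in> space X" "sX (act x g) = src G g" if "(x, g) \<in> D" for x g
    using assms(2) that unfolding right_borel_G_space_def D_def by blast+
  have X_unit: "act x (sX x) = x" if "x \<in> space X" for x
    using assms(2) that unfolding right_borel_G_space_def by blast
  have X_assoc: "act (act x g) h = act x (mult G g h)"
    if "(x, g) \<in> D" "h \<in> Ga" "src G g = rng G h" for x g h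
    using assms(2) that unfolding right_borel_G_space_def D_def Ga_def by blast
  have free: "g \<in> units G" if "(x, g) \<in> D" "act x g = x" for x g
    using assms(3) that unfolding free_action_def D_def by blast

  have uniq: "g = g'" if "(y, g) \<in> D" "(y, g') \<in> D" "act y g = act y g'" for y g g'
  proof -
    have y: "y \<in> space X" and g: "g \<in> Ga" "sX y = rng G g" and g': "g' \<in> Ga" "sX y = rng G g'"
      using that D_iff by auto
    define z where "z = act y g"
    have z: "z \<in> space X" "sX z = src G g" using X_act[OF that(1)] by (simp_all add: z_def)
    have zi: "(z, ginv G g) \<in> D" using z G_inv[OF g(1)] D_iff by simp
    have "act z (ginv G g) = act y (mult G g (ginv G g))"
      unfolding z_def by (rule X_assoc[OF that(1)]) (use G_inv[OF g(1)] in auto)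
    also have "\<dots> = y" using G_inv[OF g(1)] g(2) X_unit[OF y] by simp
    finally have zy: "act z (ginv G g) = y" .
    define d where "d = mult G (ginv G g) g'"
    have cd: "src G (ginv G g) = rng G g'" using G_inv[OF g(1)] g g' by simp
    have d: "d \<in> Ga" "rng G d = src G g" unfolding d_def
      using G_mult[OF G_inv(1)[OF g(1)] g'(1) cd] G_inv[OF g(1)] by simp_all
    have zd: "(z, d) \<in> D" using z d D_iff by simp
    have "act z d = act (act z (ginv G g)) g'"
      unfolding d_def by (rule X_assoc[OF zi g'(1) cd, symmetric])
    also have "\<dots> = z" using zy that(3) by (simp add: z_def)
    finally have "d \<in> units G" using free[OF zd] by simp
    then have dsg: "d = src G g" using G_unit d(2) by metis
    have "g' = mult G (rng G g') g'" using G_id[OF g'(1)] by simp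
    also have "\<dots> = mult G (mult G g (ginv G g)) g'" using G_inv[OF g(1)] g g' by simp
    also have "\<dots> = mult G g d"
      unfolding d_def by (rule G_assoc) (use g g' G_inv[OF g(1)] in auto)
    also have "\<dots> = g" using dsg G_id[OF g(1)] by simp
    finally show ?thesis by simp
  qed
  define q where "q = orbit X G sX act"
  define OS where "OS = orbit_space X G sX act"
  have q_iff: "z \<in> q x \<longleftrightarrow> (\<exists>g. (x, g) \<in> D \<and> z = act x g)" for x z
    by (auto simp: q_def orbit_def D_def)
  have spOS: "space OS = q ` space X"
    unfolding OS_def orbit_space_def Let_def q_def[symmetric] by (rule space_measure_of_conv)
  have q_meas: "q \<in> X \<rightarrow>\<^sub>M OS"
    unfolding OS_def orbit_space_def Let_def q_def[symmetric]
    by (rule measurable_measure_of) auto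
  from assms(4) obtain c where c: "c \<in> OS \<rightarrow>\<^sub>M X" "\<And>Q. Q \<in> space OS \<Longrightarrow> q (c Q) = Q"
    unfolding OS_def q_def by blast
  define sig where "sig x = c (q x)" for x
  have sig_meas: "sig \<in> X \<rightarrow>\<^sub>M X" unfolding sig_def
    by (rule measurable_comp[OF q_meas c(1), unfolded comp_def])
  have sig: "sig x \<in> space X" "q (sig x) = q x" if "x \<in> space X" for x
    using measurable_space[OF sig_meas that] c(2)[of "q x"] spOS that by (auto simp: sig_def)
  have self: "x \<in> q x" if "x \<in> space X" for x
  proof -
    have "(x, sX x) \<in> D" using that X_sX[OF that] G_us G_unit D_iff by auto
    then show ?thesis using X_unit[OF that] q_iff by metis
  qed
  have orbit_act: "q (act x g) = q x" if xg: "(x, g) \<in> D" for x g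
  proof -
    have x: "x \<in> space X" and g: "g \<in> Ga" "sX x = rng G g" using xg D_iff by auto
    have y: "act x g \<in> space X" "sX (act x g) = src G g" using X_act[OF xg] by auto
    show ?thesis
    proof (intro set_eqI iffI)
      fix z assume "z \<in> q (act x g)"
      then obtain h where h: "(act x g, h) \<in> D" "z = act (act x g) h" using q_iff by blast
      have h': "h \<in> Ga" "src G g = rng G h" using h(1) y D_iff by auto
      have "z = act x (mult G g h)" using X_assoc[OF xg h'] h(2) by simp
      moreover have "(x, mult G g h) \<in> D" using G_mult[OF g(1) h'] x g D_iff by simp
      ultimately show "z \<in> q x" using q_iff by blast
    next
      fix z assume "z \<in> q x"
      then obtain d where d: "(x, d) \<in> D" "z = act x d" using q_iff by blast
      have d': "d \<in> Ga" "sX x = rng G d" using d(1) D_iff by auto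
      have cd: "src G (ginv G g) = rng G d" using G_inv[OF g(1)] g d' by simp
      define e where "e = mult G (ginv G g) d"
      have e: "e \<in> Ga" "rng G e = src G g"
        using G_mult[OF G_inv(1)[OF g(1)] d'(1) cd] G_inv[OF g(1)] by (simp_all add: e_def)
      have ye: "(act x g, e) \<in> D" using y e D_iff by simp
      have "act (act x g) e = act x (mult G g e)" by (rule X_assoc[OF xg e(1)]) (use e in simp)
      also have "mult G g e = mult G (mult G g (ginv G g)) d"
        unfolding e_def by (rule G_assoc[symmetric]) (use g d' G_inv[OF g(1)] in auto)
      also have "\<dots> = d" using G_inv[OF g(1)] G_id[OF d'(1)] g d' by simp
      finally show "z \<in> q (act x g)" using q_iff ye d(2) by metis
    qed
  qed
  have ex: "\<exists>g. (sig x, g) \<in> D \<and> act (sig x) g = x" if "x \<in> space X" for x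
    using self[OF that] sig(2)[OF that] q_iff by metis
  define phi where "phi x = (THE g. (sig x, g) \<in> D \<and> act (sig x) g = x)" for x
  have phi: "(sig x, phi x) \<in> D" "act (sig x) (phi x) = x" if "x \<in> space X" for x
  proof -
    have "\<exists>!g. (sig x, g) \<in> D \<and> act (sig x) g = x"
      using ex[OF that] uniq by metis
    from theI'[OF this] show "(sig x, phi x) \<in> D" "act (sig x) (phi x) = x"
      unfolding phi_def by blast+
  qed
  have phi_iff: "((sig x, g) \<in> D \<and> act (sig x) g = x) \<longleftrightarrow> g = phi x" if "x \<in> space X" for x g
    using phi[OF that] uniq by metis
  obtain fX and gX :: "real \<Rightarrow> 'x" where fX: "fX \<in> X \<rightarrow>\<^sub>M borel" "inj_on fX (space X)"
    "analytic_real_set (fX ` space X)" "gX \<in> restrict_space borel (fX ` space X) \<rightarrow>\<^sub>M X"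
    "\<And>x. x \<in> space X \<Longrightarrow> gX (fX x) = x"
    using analytic_data[OF X_an] by blast
  obtain fY and gY :: "real \<Rightarrow> 'g" where fY: "fY \<in> arrows G \<rightarrow>\<^sub>M borel" "inj_on fY (space (arrows G))"
    "analytic_real_set (fY ` space (arrows G))" "gY \<in> restrict_space borel (fY ` space (arrows G)) \<rightarrow>\<^sub>M arrows G"
    "\<And>x. x \<in> space (arrows G) \<Longrightarrow> gY (fY x) = x"
    using analytic_data[OF G_an] by blast
  have sing: "{u} \<in> sets X" if "u \<in> space X" for u
  proof -
    have "{u} = fX -` {fX u} \<inter> space X" using fX(2) that by (auto simp: inj_on_def)
    also have "\<dots> \<in> sets X" by (rule measurable_sets[OF fX(1)]) simp
    finally show ?thesis .
  qed
  have phi_sp: "phi x \<in> Ga" if "x \<in> space X" for x using phi(1)[OF that] D_iff by simp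
  have phi_meas: "phi \<in> X \<rightarrow>\<^sub>M arrows G"
  proof (rule graph_measurable[OF X_an G_an])
    show "\<And>x. x \<in> space X \<Longrightarrow> phi x \<in> space (arrows G)" using phi_sp by (simp add: Ga_def)
    define M where "M = X \<Otimes>\<^sub>M arrows G"
    define K where "K = {p \<in> space M. fY (sX (sig (fst p))) = fY (rng G (snd p))}"
    have K: "K \<in> sets M" unfolding K_def
    proof (rule measurable_equality_set)
      show "(\<lambda>p. fY (sX (sig (fst p)))) \<in> borel_measurable M" unfolding M_def
        by (intro measurable_comp[OF measurable_comp[OF measurable_comp[OF measurable_fst sig_meas] X_sX_meas] fY(1), unfolded comp_def])
      show "(\<lambda>p. fY (rng G (snd p))) \<in> borel_measurable M" unfolding M_def
        by (intro measurable_comp[OF measurable_comp[OF measurable_snd G_rng_meas] fY(1), unfolded comp_def])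
    qed
    have spM: "space M = space X \<times> Ga" by (simp add: M_def Ga_def space_pair_measure)
    have K_iff: "p \<in> K \<longleftrightarrow> p \<in> space M \<and> (sig (fst p), snd p) \<in> D" for p
    proof -
      have "p \<in> space M \<Longrightarrow> sX (sig (fst p)) \<in> Ga \<and> rng G (snd p) \<in> Ga"
        using spM sig X_sX G_us G_rs by auto
      then show ?thesis using fY(2) spM sig D_iff unfolding K_def inj_on_def Ga_def by auto
    qed
    define tau :: "'x \<times> 'g \<Rightarrow> 'x \<times> 'g" where "tau p = (sig (fst p), snd p)" for p
    have tau: "tau \<in> restrict_space M K \<rightarrow>\<^sub>M restrict_space M D"
    proof (rule measurable_restrict_space2)
      show "tau \<in> space (restrict_space M K) \<rightarrow> D"
        using K_iff by (auto simp: space_restrict_space tau_def)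
      show "tau \<in> restrict_space M K \<rightarrow>\<^sub>M M" unfolding tau_def M_def
        by (intro measurable_restrict_space1 measurable_Pair measurable_comp[OF measurable_fst sig_meas, unfolded comp_def] measurable_snd)
    qed
    have at: "(\<lambda>p. act (sig (fst p)) (snd p)) \<in> restrict_space M K \<rightarrow>\<^sub>M X"
      using measurable_comp[OF tau X_act_meas[folded M_def]] by (simp add: comp_def tau_def)
    define Gam where "Gam = {p \<in> space (restrict_space M K). fX (act (sig (fst p)) (snd p)) = fX (fst p)}"
    have "Gam \<in> sets (restrict_space M K)" unfolding Gam_def
    proof (rule measurable_equality_set)
      show "(\<lambda>p. fX (act (sig (fst p)) (snd p))) \<in> borel_measurable (restrict_space M K)"
        by (rule measurable_comp[OF at fX(1), unfolded comp_def])
      show "(\<lambda>p. fX (fst p)) \<in> borel_measurable (restrict_space M K)" unfolding M_def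
        by (intro measurable_restrict_space1 measurable_comp[OF measurable_fst fX(1), unfolded comp_def])
    qed
    then have GamM: "Gam \<in> sets M" using K sets_restrict_space_iff[of K M Gam] by simp
    have "{p \<in> space M. snd p = phi (fst p)} = Gam"
    proof (intro set_eqI iffI)
      fix p assume p: "p \<in> {p \<in> space M. snd p = phi (fst p)}"
      then have x: "fst p \<in> space X" using spM by auto
      have "(sig (fst p), snd p) \<in> D \<and> act (sig (fst p)) (snd p) = fst p"
        using phi_iff[OF x] p by simp
      then show "p \<in> Gam" using p K_iff by (auto simp: Gam_def space_restrict_space)
    next
      fix p assume p: "p \<in> Gam"
      then have pK: "p \<in> K" and eq: "fX (act (sig (fst p)) (snd p)) = fX (fst p)"
        by (auto simp: Gam_def space_restrict_space)
      then have pM: "p \<in> space M" and pD: "(sig (fst p), snd p) \<in> D" using K_iff by auto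
      then have x: "fst p \<in> space X" using spM by auto
      have "act (sig (fst p)) (snd p) = fst p"
        using eq fX(2) X_act(1)[OF pD] x unfolding inj_on_def by blast
      then have "snd p = phi (fst p)" using phi_iff[OF x] pD by blast
      then show "p \<in> {p \<in> space M. snd p = phi (fst p)}" using pM by simp
    qed
    then show "{p \<in> space (X \<Otimes>\<^sub>M arrows G). snd p = phi (fst p)} \<in> sets (X \<Otimes>\<^sub>M arrows G)"
      using GamM by (simp add: M_def)
  qed
  define A where "A = transformation_arrows X G sX"
  have A_def': "A = restrict_space (X \<Otimes>\<^sub>M arrows G) D"
    by (simp add: A_def transformation_arrows_def D_def)
  have spA: "space A = D"
    unfolding A_def' space_restrict_space using D_iff by (auto simp: space_pair_measure Ga_def)
  define psi where "psi x = ginv G (phi x)" for x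
  have psi_meas: "psi \<in> X \<rightarrow>\<^sub>M arrows G"
    unfolding psi_def by (rule measurable_comp[OF phi_meas G_inv_meas, unfolded comp_def])
  have psiD: "(x, psi x) \<in> D" if x: "x \<in> space X" for x
  proof -
    have "sX x = sX (act (sig x) (phi x))" using phi(2)[OF x] by simp
    also have "\<dots> = src G (phi x)" using X_act(2)[OF phi(1)[OF x]] .
    finally show ?thesis using D_iff x G_inv[OF phi_sp[OF x]] by (simp add: psi_def)
  qed
  have pt_meas: "(\<lambda>x. (x, psi x)) \<in> X \<rightarrow>\<^sub>M A"
    unfolding A_def'
  proof (rule measurable_restrict_space2)
    show "(\<lambda>x. (x, psi x)) \<in> space X \<rightarrow> D" using psiD by auto
    show "(\<lambda>x. (x, psi x)) \<in> X \<rightarrow>\<^sub>M X \<Otimes>\<^sub>M arrows G"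
      by (intro measurable_Pair measurable_ident_sets psi_meas) simp
  qed
  have fst_meas: "fst \<in> A \<rightarrow>\<^sub>M X" unfolding A_def'
    by (intro measurable_restrict_space1 measurable_fst)
  have fib: "{a \<in> space A. fst a = u} \<in> sets A" if "u \<in> space X" for u
  proof -
    have "{a \<in> space A. fst a = u} = fst -` {u} \<inter> space A" by auto
    also have "\<dots> \<in> sets A" by (rule measurable_sets[OF fst_meas sing[OF that]])
    finally show ?thesis .
  qed
  have equiv: "mult G g (psi (act x g)) = psi x" if xg: "(x, g) \<in> D" for x g
  proof -
    have x: "x \<in> space X" and g: "g \<in> Ga" "sX x = rng G g" using xg D_iff by auto
    define y where "y = act x g"
    have y: "y \<in> space X" using X_act[OF xg] by (simp add: y_def)
    have sy: "sig y = sig x" using orbit_act[OF xg] by (simp add: sig_def y_def)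
    have px: "phi x \<in> Ga" "src G (phi x) = sX x" "rng G (phi x) = sX (sig x)"
    proof -
      show "phi x \<in> Ga" by (rule phi_sp[OF x])
      show "src G (phi x) = sX x" using X_act(2)[OF phi(1)[OF x]] phi(2)[OF x] by simp
      show "rng G (phi x) = sX (sig x)" using phi(1)[OF x] D_iff by simp
    qed
    have c1: "src G (phi x) = rng G g" using px g by simp
    have "(sig y, mult G (phi x) g) \<in> D \<and> act (sig y) (mult G (phi x) g) = y"
    proof
      show "(sig y, mult G (phi x) g) \<in> D"
        using G_mult[OF px(1) g(1) c1] px sy sig(1)[OF x] D_iff by simp
      have "act (sig y) (mult G (phi x) g) = act (act (sig x) (phi x)) g"
        using X_assoc[OF phi(1)[OF x] g(1) c1] sy by simp
      then show "act (sig y) (mult G (phi x) g) = y" using phi(2)[OF x] by (simp add: y_def)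
    qed
    then have phy: "phi y = mult G (phi x) g" using phi_iff[OF y, of "mult G (phi x) g"] by simp
    have pyG: "phi y \<in> Ga" by (rule phi_sp[OF y])
    define w where "w = mult G g (ginv G (phi y))"
    have c2: "src G g = rng G (ginv G (phi y))"
      using G_inv[OF pyG] phy G_mult[OF px(1) g(1) c1] by simp
    have w: "w \<in> Ga" "rng G w = rng G g"
      using G_mult[OF g(1) G_inv(1)[OF pyG] c2] by (simp_all add: w_def)
    have "rng G (phi x) = rng G (phi y)" using phy G_mult[OF px(1) g(1) c1] by simp
    also have "\<dots> = mult G (phi y) (ginv G (phi y))" using G_inv[OF pyG] by simp
    also have "\<dots> = mult G (mult G (phi x) g) (ginv G (phi y))"
    proof -
      define iy where "iy = ginv G (phi y)"
      show ?thesis using phy unfolding iy_def[symmetric] by simp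
    qed
    also have "\<dots> = mult G (phi x) w"
      unfolding w_def by (rule G_assoc) (use px g c1 c2 G_inv[OF pyG] in auto)
    finally have r: "rng G (phi x) = mult G (phi x) w" .
    have "ginv G (phi x) = mult G (ginv G (phi x)) (rng G (phi x))"
      using G_id(2)[OF G_inv(1)[OF px(1)]] G_inv(3)[OF px(1)] by simp
    also have "\<dots> = mult G (ginv G (phi x)) (mult G (phi x) w)" using r by simp
    also have "\<dots> = mult G (mult G (ginv G (phi x)) (phi x)) w"
      by (rule G_assoc[symmetric]) (use px g c1 w G_inv[OF px(1)] in auto)
    also have "\<dots> = mult G (src G (phi x)) w" using G_inv[OF px(1)] by simp
    also have "\<dots> = w" using G_id(1)[OF w(1)] w(2) c1 by simp
    finally show ?thesis by (simp add: w_def psi_def y_def)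
  qed
  have fam: "proper_groupoid_family A X (\<lambda>(x, \<gamma>). x) (\<lambda>(x, \<gamma>). act x \<gamma>)
            (\<lambda>(x, \<gamma>) (y, \<eta>). (x, mult G \<gamma> \<eta>)) (\<lambda>u. return A (u, psi u))"
    unfolding proper_groupoid_family_def
  proof (intro conjI)
    show "\<forall>u\<in>space X. prob_space (return A (u, psi u)) \<and> sets (return A (u, psi u)) = sets A \<and>
        emeasure (return A (u, psi u)) {a \<in> space A. (case a of (x, \<gamma>) \<Rightarrow> x) = u} = 1"
    proof
      fix u assume u: "u \<in> space X"
      have uA: "(u, psi u) \<in> space A" using psiD[OF u] spA by simp
      have e: "{a \<in> space A. (case a of (x, \<gamma>) \<Rightarrow> x) = u} = {a \<in> space A. fst a = u}"
        by (auto split: prod.splits)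
      show "prob_space (return A (u, psi u)) \<and> sets (return A (u, psi u)) = sets A \<and>
        emeasure (return A (u, psi u)) {a \<in> space A. (case a of (x, \<gamma>) \<Rightarrow> x) = u} = 1"
        using prob_space_return[OF uA] emeasure_return[OF fib[OF u], of "(u, psi u)"] uA
        unfolding e by simp
    qed
    show "\<forall>f :: 'x \<times> 'g \<Rightarrow> ennreal. f \<in> borel_measurable A \<longrightarrow>
        (\<lambda>u. \<integral>\<^sup>+ a. f a \<partial>(return A (u, psi u))) \<in> borel_measurable X"
    proof (intro allI impI)
      fix f :: "'x \<times> 'g \<Rightarrow> ennreal" assume f: "f \<in> borel_measurable A"
      have "(\<lambda>u. f (u, psi u)) \<in> borel_measurable X"
        by (rule measurable_comp[OF pt_meas f, unfolded comp_def])
      moreover have "\<And>u. u \<in> space X \<Longrightarrow> f (u, psi u) = (\<integral>\<^sup>+ a. f a \<partial>(return A (u, psi u)))"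
        using nn_integral_return[OF _ f] psiD spA by simp
      ultimately show "(\<lambda>u. \<integral>\<^sup>+ a. f a \<partial>(return A (u, psi u))) \<in> borel_measurable X"
        by (rule measurable_cong[THEN iffD1, rotated])
    qed
    show "\<forall>g\<in>space A. \<forall>E\<in>sets A.
        emeasure (return A ((case g of (x, \<gamma>) \<Rightarrow> x), psi (case g of (x, \<gamma>) \<Rightarrow> x))) E =
        emeasure (return A ((case g of (x, \<gamma>) \<Rightarrow> act x \<gamma>), psi (case g of (x, \<gamma>) \<Rightarrow> act x \<gamma>)))
          {h \<in> space A. (case h of (x, \<gamma>) \<Rightarrow> x) = (case g of (x, \<gamma>) \<Rightarrow> act x \<gamma>) \<and>
             (case g of (x, \<gamma>) \<Rightarrow> \<lambda>(y, \<eta>). (x, mult G \<gamma> \<eta>)) h \<in> E}"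
    proof (intro ballI)
      fix gg E assume gg: "gg \<in> space A" and E: "E \<in> sets A"
      obtain x g where xg0: "gg = (x, g)" by (cases gg)
      have xg: "(x, g) \<in> D" using gg xg0 spA by simp
      have x: "x \<in> space X" and g: "g \<in> Ga" "sX x = rng G g" using xg D_iff by auto
      define y where "y = act x g"
      have y: "y \<in> space X" "sX y = src G g" using X_act[OF xg] by (simp_all add: y_def)
      define S where "S = {h \<in> space A. fst h = y \<and> (x, mult G g (snd h)) \<in> E}"
      have eS: "{h \<in> space A. (case h of (x, \<gamma>) \<Rightarrow> x) = (case gg of (x, \<gamma>) \<Rightarrow> act x \<gamma>) \<and>
             (case gg of (x, \<gamma>) \<Rightarrow> \<lambda>(y, \<eta>). (x, mult G \<gamma> \<eta>)) h \<in> E} = S"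
        by (auto simp: S_def xg0 y_def split: prod.splits)
      define T where "T = {a \<in> space A. fst a = y}"
      have T: "T \<in> sets A" unfolding T_def by (rule fib[OF y(1)])
      have spT: "space (restrict_space A T) = T" by (auto simp: space_restrict_space T_def)
      have TD: "h \<in> T \<Longrightarrow> h \<in> D \<and> fst h = y" for h by (auto simp: T_def spA)
      define k where "k h = (x, mult G g (snd h))" for h :: "'x \<times> 'g"
      have pc: "(\<lambda>h. (g, snd h)) \<in> restrict_space A T \<rightarrow>\<^sub>M restrict_space (arrows G \<Otimes>\<^sub>M arrows G) (composable G)"
      proof (rule measurable_restrict_space2)
        show "(\<lambda>h. (g, snd h)) \<in> space (restrict_space A T) \<rightarrow> composable G"
        proof
          fix h assume "h \<in> space (restrict_space A T)"
          then have "h \<in> D" "fst h = y" using spT TD by auto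
          then show "(g, snd h) \<in> composable G" using g y D_iff[of "fst h" "snd h"]
            by (auto simp: composable_def Ga_def)
        qed
        show "(\<lambda>h. (g, snd h)) \<in> restrict_space A T \<rightarrow>\<^sub>M arrows G \<Otimes>\<^sub>M arrows G"
          unfolding A_def' using g
          by (intro measurable_Pair measurable_const measurable_restrict_space1 measurable_snd) (auto simp: Ga_def)
      qed
      have km: "k \<in> restrict_space A T \<rightarrow>\<^sub>M A"
        unfolding A_def'[symmetric]
      proof -
        have "k \<in> restrict_space A T \<rightarrow>\<^sub>M restrict_space (X \<Otimes>\<^sub>M arrows G) D"
        proof (rule measurable_restrict_space2)
          show "k \<in> space (restrict_space A T) \<rightarrow> D"
          proof
            fix h assume "h \<in> space (restrict_space A T)"
            then have hD: "h \<in> D" "fst h = y" using spT TD by auto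
            then have h: "snd h \<in> Ga" "src G g = rng G (snd h)" using y D_iff[of "fst h" "snd h"] by auto
            show "k h \<in> D" using G_mult[OF g(1) h] x g D_iff by (simp add: k_def)
          qed
          have m2: "(\<lambda>h. mult G g (snd h)) \<in> restrict_space A T \<rightarrow>\<^sub>M arrows G"
            using measurable_comp[OF pc G_mult_meas] by (simp add: comp_def)
          show "k \<in> restrict_space A T \<rightarrow>\<^sub>M X \<Otimes>\<^sub>M arrows G"
            unfolding k_def using x by (intro measurable_Pair measurable_const m2)
        qed
        then show "k \<in> restrict_space A T \<rightarrow>\<^sub>M A" by (simp add: A_def')
      qed
      have "S = k -` E \<inter> space (restrict_space A T)"
        unfolding spT by (auto simp: S_def T_def k_def)
      also have "\<dots> \<in> sets (restrict_space A T)" by (rule measurable_sets[OF km E])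
      finally have "S \<in> sets (restrict_space A T)" .
      then have SA: "S \<in> sets A" using sets_restrict_space_iff[of T A S] T by simp
      have yA: "(y, psi y) \<in> space A" using psiD[OF y(1)] spA by simp
      have "(y, psi y) \<in> S \<longleftrightarrow> (x, psi x) \<in> E"
        using yA equiv[OF xg] by (simp add: S_def y_def)
      then have "indicator S (y, psi y) = (indicator E (x, psi x) :: ennreal)"
        by (simp add: indicator_def)
      then show "emeasure (return A ((case gg of (x, \<gamma>) \<Rightarrow> x), psi (case gg of (x, \<gamma>) \<Rightarrow> x))) E =
        emeasure (return A ((case gg of (x, \<gamma>) \<Rightarrow> act x \<gamma>), psi (case gg of (x, \<gamma>) \<Rightarrow> act x \<gamma>)))
          {h \<in> space A. (case h of (x, \<gamma>) \<Rightarrow> x) = (case gg of (x, \<gamma>) \<Rightarrow> act x \<gamma>) \<and>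
             (case gg of (x, \<gamma>) \<Rightarrow> \<lambda>(y, \<eta>). (x, mult G \<gamma> \<eta>)) h \<in> E}"
        unfolding eS using SA E by (simp add: xg0 y_def)
    qed
  qed
  show ?thesis
    unfolding proper_right_borel_G_space_def using assms(2) fam by (auto simp: A_def)
qed


end
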